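(* Let $K$ be a compact Hausdorff space and $K'$ its Cantor--Bendixson derivative. If $K'$ has the extension property and $K'$ admits an extension operator in $K$, then $K$ has the extension property.
   Context: $K'$ denotes the set of non-isolated points of $K$. $C(K)$ is the Banach space of real-valued continuous functions on $K$ with the supremum norm. For a closed $F\subseteq K$, an extension operator for $F$ in $K$ is a bounded linear map $E:C(F)\to C(K)$ with $E(f)|_F=f$ for all $f\in C(F)$. A compact space has the extension property if every nonempty closed subset admits an extension operator in it. *)

theory Defs
  imports "HOL-Analysis.Analysis"
begin

text \<open>C(F) for a closed F of the space X is represented by real functions on the
carrier that are continuous on the subspace F (values outside F are irrelevant).\<close>

definition extension_operator ::
  "'a topology \<Rightarrow> 'a set \<Rightarrow> (('a \<Rightarrow> real) \<Rightarrow> ('a \<Rightarrow> real)) \<Rightarrow> bool" where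
  "extension_operator X F E \<longleftrightarrow>
     (\<forall>f. continuous_map (subtopology X F) euclideanreal f \<longrightarrow>
          continuous_map X euclideanreal (E f)) \<and>
     (\<forall>f. continuous_map (subtopology X F) euclideanreal f \<longrightarrow>
          (\<forall>x\<in>F. E f x = f x)) \<and>
     (\<forall>f g a b. continuous_map (subtopology X F) euclideanreal f \<and>
                continuous_map (subtopology X F) euclideanreal g \<longrightarrow>
          (\<forall>x\<in>topspace X. E (\<lambda>y. a * f y + b * g y) x = a * E f x + b * E g x)) \<and>
     (\<exists>M. \<forall>f B. continuous_map (subtopology X F) euclideanreal f \<and> (\<forall>y\<in>F. \<bar>f y\<bar> \<le> B) \<longrightarrow>
          (\<forall>x\<in>topspace X. \<bar>E f x\<bar> \<le> M * B))"

definition admits_extension_operator :: "'a topology \<Rightarrow> 'a set \<Rightarrow> bool" where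
  "admits_extension_operator X F \<longleftrightarrow> (\<exists>E. extension_operator X F E)"

definition extension_property :: "'a topology \<Rightarrow> bool" where
  "extension_property X \<longleftrightarrow>
     (\<forall>F. closedin X F \<and> F \<noteq> {} \<longrightarrow> admits_extension_operator X F)"

end

theory Submission
  imports Defs
begin

lemma paste_cont:
  assumes F: "closedin X F"
    and f: "continuous_map (subtopology X F) euclideanreal f"
    and g: "continuous_map X euclideanreal g"
    and eq: "\<And>x. x \<in> F \<Longrightarrow> x \<in> X derived_set_of topspace X \<Longrightarrow> g x = f x"
  shows "continuous_map X euclideanreal (\<lambda>x. if x \<in> F then f x else g x)"
  unfolding continuous_map_def
proof (intro conjI allI impI)
  show "(\<lambda>x. if x \<in> F then f x else g x) \<in> topspace X \<rightarrow> topspace euclideanreal" by simp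
  fix U :: "real set" assume U: "openin euclideanreal U"
  let ?P = "{x \<in> topspace X. (if x \<in> F then f x else g x) \<in> U}"
  have gU: "openin X {x \<in> topspace X. g x \<in> U}"
    using g U unfolding continuous_map_def by blast
  have "openin (subtopology X F) {x \<in> topspace (subtopology X F). f x \<in> U}"
    using f U unfolding continuous_map_def by blast
  then obtain W where W: "openin X W" and Weq: "{x \<in> topspace (subtopology X F). f x \<in> U} = W \<inter> F"
    by (auto simp: openin_subtopology)
  have FX: "F \<subseteq> topspace X" using F closedin_subset by blast
  show "openin X ?P"
  proof (subst openin_subopen, intro ballI)
    fix x assume x: "x \<in> ?P"
    show "\<exists>T. openin X T \<and> x \<in> T \<and> T \<subseteq> ?P"
    proof (cases "x \<in> X derived_set_of topspace X")
      case False
      then obtain T where T: "x \<in> T" "openin X T" and Tx: "\<forall>y. y \<noteq> x \<longrightarrow> y \<in> topspace X \<longrightarrow> y \<notin> T"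
        using x by (auto simp: derived_set_of_def)
      have "T = {x}" using T Tx openin_subset by fastforce
      then show ?thesis using T x by auto
    next
      case True
      show ?thesis
      proof (cases "x \<in> F")
        case xF: True
        have "g x \<in> U" "f x \<in> U" using x xF eq[OF xF True] by auto
        then have "x \<in> W" using Weq xF FX by auto
        moreover have "x \<in> {x \<in> topspace X. g x \<in> U}" using x \<open>g x \<in> U\<close> by auto
        moreover have "W \<inter> {x \<in> topspace X. g x \<in> U} \<subseteq> ?P"
          using Weq by auto
        ultimately show ?thesis using W gU by (intro exI[of _ "W \<inter> {x \<in> topspace X. g x \<in> U}"]) auto
      next
        case xF: False
        have "openin X (topspace X - F)" using F by auto
        moreover have "x \<in> {x \<in> topspace X. g x \<in> U} \<inter> (topspace X - F)" using x xF by auto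
        moreover have "{x \<in> topspace X. g x \<in> U} \<inter> (topspace X - F) \<subseteq> ?P" by auto
        ultimately show ?thesis using gU by (intro exI[of _ "{x \<in> topspace X. g x \<in> U} \<inter> (topspace X - F)"]) auto
      qed
    qed
  qed
qed

lemma admits_empty: "admits_extension_operator Y {}"
  unfolding admits_extension_operator_def extension_operator_def
  by (rule exI[of _ "\<lambda>f x. 0"]) (auto intro: exI[of _ 0])

theorem proposition3p8:
  fixes X :: "'a topology"
  assumes "compact_space X" and "Hausdorff_space X"
    and "extension_property (subtopology X (X derived_set_of topspace X))"
    and "admits_extension_operator X (X derived_set_of topspace X)"
  shows "extension_property X"
  unfolding extension_property_def
proof (intro allI impI)
  define K where "K = X derived_set_of topspace X"
  have KX: "K \<subseteq> topspace X" unfolding K_def by (rule derived_set_of_subset_topspace)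
  fix F assume FF: "closedin X F \<and> F \<noteq> {}"
  then have F: "closedin X F" and Fne: "F \<noteq> {}" by auto
  have FX: "F \<subseteq> topspace X" using F closedin_subset by blast
  obtain E0 where E0: "extension_operator X K E0"
    using assms(4) unfolding admits_extension_operator_def K_def by blast
  have "admits_extension_operator (subtopology X K) (F \<inter> K)"
  proof (cases "F \<inter> K = {}")
    case True then show ?thesis using admits_empty by simp
  next
    case False
    have "closedin (subtopology X K) (F \<inter> K)"
      unfolding closedin_subtopology using F by blast
    then show ?thesis using assms(3) False unfolding extension_property_def K_def by blast
  qed
  then obtain E1 where E1: "extension_operator (subtopology X K) (F \<inter> K) E1"
    unfolding admits_extension_operator_def by blast
  have subK: "subtopology (subtopology X K) (F \<inter> K) = subtopology X (F \<inter> K)"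
  proof -
    have "K \<inter> (F \<inter> K) = F \<inter> K" by blast
    then show ?thesis by (simp add: subtopology_subtopology)
  qed
  have tK: "topspace (subtopology X K) = K" using KX by (simp add: Int_absorb1)
  define E1' where "E1' = (\<lambda>f x. if x \<in> K then E1 f x else 0)"
  define E where "E = (\<lambda>f x. if x \<in> F then f x else E0 (E1' f) x)"
  note E0d = E0[unfolded extension_operator_def]
  note E1d = E1[unfolded extension_operator_def subK tK]
  note E0a = E0d[THEN conjunct1, rule_format]
  note E0b = E0d[THEN conjunct2, THEN conjunct1, rule_format]
  note E0l = E0d[THEN conjunct2, THEN conjunct2, THEN conjunct1, rule_format]
  note E1a = E1d[THEN conjunct1, rule_format]
  note E1b = E1d[THEN conjunct2, THEN conjunct1, rule_format]
  note E1l = E1d[THEN conjunct2, THEN conjunct2, THEN conjunct1, rule_format]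
  have fr: "continuous_map (subtopology X (F \<inter> K)) euclideanreal f"
    if "continuous_map (subtopology X F) euclideanreal f" for f
    by (rule continuous_map_from_subtopology_mono[OF that]) blast
  have c1: "continuous_map (subtopology X K) euclideanreal (E1' f)"
    if "continuous_map (subtopology X F) euclideanreal f" for f
  proof -
    have "continuous_map (subtopology X K) euclideanreal (E1 f)"
      by (rule E1a[OF fr[OF that]])
    then show ?thesis by (rule continuous_map_eq) (auto simp: E1'_def)
  qed
  have lin1: "E1' (\<lambda>y. a * f y + b * g y) = (\<lambda>y. a * E1' f y + b * E1' g y)"
    if "continuous_map (subtopology X F) euclideanreal f"
       "continuous_map (subtopology X F) euclideanreal g" for f g a b
  proof
    fix y
    have "\<forall>x\<in>K. E1 (\<lambda>y. a * f y + b * g y) x = a * E1 f x + b * E1 g x"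
      using E1l[OF conjI[OF fr[OF that(1)] fr[OF that(2)]]] by blast
    then show "E1' (\<lambda>y. a * f y + b * g y) y = a * E1' f y + b * E1' g y"
      unfolding E1'_def by simp
  qed
  have "extension_operator X F E"
    unfolding extension_operator_def
  proof (intro conjI allI impI)
    fix f assume f: "continuous_map (subtopology X F) euclideanreal f"
    have g: "continuous_map X euclideanreal (E0 (E1' f))" by (rule E0a[OF c1[OF f]])
    show "continuous_map X euclideanreal (E f)"
      unfolding E_def
    proof (rule paste_cont[OF F f g])
      fix x assume "x \<in> F" "x \<in> X derived_set_of topspace X"
      then have xK: "x \<in> F \<inter> K" unfolding K_def by auto
      have "E0 (E1' f) x = E1' f x" using E0b[OF c1[OF f]] xK by blast
      also have "\<dots> = E1 f x" using xK by (simp add: E1'_def)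
      also have "\<dots> = f x" using E1b[OF fr[OF f]] xK by blast
      finally show "E0 (E1' f) x = f x" .
    qed
  next
    fix f assume f: "continuous_map (subtopology X F) euclideanreal f"
    show "\<forall>x\<in>F. E f x = f x" by (simp add: E_def)
  next
    fix f g :: "'a \<Rightarrow> real" and a b
    assume fg: "continuous_map (subtopology X F) euclideanreal f \<and>
                continuous_map (subtopology X F) euclideanreal g"
    show "\<forall>x\<in>topspace X. E (\<lambda>y. a * f y + b * g y) x = a * E f x + b * E g x"
    proof
      fix x assume x: "x \<in> topspace X"
      have "E0 (\<lambda>y. a * E1' f y + b * E1' g y) x = a * E0 (E1' f) x + b * E0 (E1' g) x"
        using E0l[OF conjI[OF c1[of f] c1[of g]]] fg x by blast
      then show "E (\<lambda>y. a * f y + b * g y) x = a * E f x + b * E g x"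
        using lin1[of f g a b] fg unfolding E_def by simp
    qed
  next
    obtain M0 where M0: "\<forall>f B. continuous_map (subtopology X K) euclideanreal f \<and> (\<forall>y\<in>K. \<bar>f y\<bar> \<le> B) \<longrightarrow>
          (\<forall>x\<in>topspace X. \<bar>E0 f x\<bar> \<le> M0 * B)" using E0d[THEN conjunct2, THEN conjunct2, THEN conjunct2] by blast
    obtain M1 where M1: "\<forall>f B. continuous_map (subtopology X (F \<inter> K)) euclideanreal f \<and> (\<forall>y\<in>F \<inter> K. \<bar>f y\<bar> \<le> B) \<longrightarrow>
          (\<forall>x\<in>K. \<bar>E1 f x\<bar> \<le> M1 * B)" using E1d[THEN conjunct2, THEN conjunct2, THEN conjunct2] by blast
    show "\<exists>M. \<forall>f B. continuous_map (subtopology X F) euclideanreal f \<and> (\<forall>y\<in>F. \<bar>f y\<bar> \<le> B) \<longrightarrow>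
          (\<forall>x\<in>topspace X. \<bar>E f x\<bar> \<le> M * B)"
    proof (intro exI[of _ "max 1 (M0 * M1)"] allI impI ballI)
      fix f B x assume fB: "continuous_map (subtopology X F) euclideanreal f \<and> (\<forall>y\<in>F. \<bar>f y\<bar> \<le> B)"
        and x: "x \<in> topspace X"
      then have f: "continuous_map (subtopology X F) euclideanreal f" and bd: "\<forall>y\<in>F. \<bar>f y\<bar> \<le> B" by auto
      obtain y0 where "y0 \<in> F" using Fne by blast
      then have B0: "0 \<le> B" using bd by (meson abs_ge_zero order_trans)
      have b1: "\<forall>y\<in>K. \<bar>E1' f y\<bar> \<le> M1 * B"
        using M1 fr[OF f] bd unfolding E1'_def by auto
      have b0: "\<bar>E0 (E1' f) x\<bar> \<le> M0 * (M1 * B)"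
        using M0 c1[OF f] b1 x by blast
      show "\<bar>E f x\<bar> \<le> max 1 (M0 * M1) * B"
      proof (cases "x \<in> F")
        case True
        have "\<bar>f x\<bar> \<le> 1 * B" using bd True by simp
        also have "\<dots> \<le> max 1 (M0 * M1) * B" by (rule mult_right_mono) (use B0 in auto)
        finally show ?thesis using True by (simp add: E_def)
      next
        case False
        have "M0 * (M1 * B) = (M0 * M1) * B" by simp
        also have "\<dots> \<le> max 1 (M0 * M1) * B" by (rule mult_right_mono) (use B0 in auto)
        finally show ?thesis using False b0 by (simp add: E_def)
      qed
    qed
  qed
  then show "admits_extension_operator X F" unfolding admits_extension_operator_def by blast
qed

end
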